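(* Let $\tilde H$ be a Hermitian operator on a finite-dimensional Hilbert space, let $|\tilde\psi\rangle$ be a nondegenerate eigenstate of $\tilde H$, and let $\{\omega_j\}$ be the energy differences between its eigenvalue and the other eigenvalues of $\tilde H$. Let $T$ be a real random variable with characteristic function $\Phi(\omega)=\mathbb E[e^{i\omega T}]$ and suppose $\sup_{\omega_j}|\Phi(\omega_j)|=\epsilon$. Let $n\ge 1$ and let $T'$ be the sum of $n$ independent copies of $T$. Then there exists a quantum operation $\mathcal E$ such that for all states $\rho$, $$\|(M^{\mathcal E}-\mathcal R^{T'})(\rho)\|_{\rm tr}\le \epsilon^n,$$ where $\mathcal R^{T'}(\rho)=\mathbb E\big[e^{-i\tilde HT'}\rho\,e^{i\tilde HT'}\big]$ and $M^{\mathcal E}(\rho)=P\rho P+\mathcal E\big((\mathbb 1-P)\rho(\mathbb 1-P)\big)$ with $P=|\tilde\psi\rangle\langle\tilde\psi|$.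
   Context: $\|A\|_{\rm tr}=\mathrm{tr}|A|$ is the trace norm; a quantum operation is a completely positive trace-preserving map. *)

theory Defs
  imports "HOL-Analysis.Analysis" "HOL-Probability.Probability"
begin

definition cinner :: "complex^'n \<Rightarrow> complex^'n \<Rightarrow> complex" where
  "cinner v w = (\<Sum>i\<in>UNIV. cnj (v$i) * w$i)"

definition cadj :: "complex^'n^'n \<Rightarrow> complex^'n^'n" where
  "cadj A = (\<chi> i j. cnj (A$j$i))"

definition hermitian :: "complex^'n^'n \<Rightarrow> bool" where
  "hermitian A \<longleftrightarrow> cadj A = A"

definition psd :: "complex^'n^'n \<Rightarrow> bool" where
  "psd A \<longleftrightarrow> (\<forall>v. Im (cinner v (A *v v)) = 0 \<and> 0 \<le> Re (cinner v (A *v v)))"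

definition density :: "complex^'n^'n \<Rightarrow> bool" where
  "density A \<longleftrightarrow> psd A \<and> trace A = 1"

definition mabs :: "complex^'n^'n \<Rightarrow> complex^'n^'n" where
  "mabs A = (THE B. psd B \<and> B ** B = cadj A ** A)"

definition trace_norm :: "complex^'n^'n \<Rightarrow> real" where
  "trace_norm A = Re (trace (mabs A))"

definition cscale :: "complex \<Rightarrow> complex^'n^'m \<Rightarrow> complex^'n^'m" where
  "cscale c A = (\<chi> i j. c * A$i$j)"

fun mpow :: "complex^'n^'n \<Rightarrow> nat \<Rightarrow> complex^'n^'n" where
  "mpow A 0 = mat 1"
| "mpow A (Suc k) = A ** mpow A k"

definition mexp :: "complex^'n^'n \<Rightarrow> complex^'n^'n" where
  "mexp A = (\<Sum>k. cscale (1 / of_nat (fact k)) (mpow A k))"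

definition outer :: "complex^'n \<Rightarrow> complex^'n \<Rightarrow> complex^'n^'n" where
  "outer u v = (\<chi> i j. u$i * cnj (v$j))"

text \<open>Positivity of a k x k block operator (blocks n x n), i.e. an operator on C^k \<otimes> C^n.\<close>
definition block_psd :: "nat \<Rightarrow> (nat \<Rightarrow> nat \<Rightarrow> complex^'n^'n) \<Rightarrow> bool" where
  "block_psd k X \<longleftrightarrow> (\<forall>v :: nat \<Rightarrow> complex^'n.
     Im (\<Sum>a<k. \<Sum>b<k. cinner (v a) (X a b *v v b)) = 0 \<and>
     0 \<le> Re (\<Sum>a<k. \<Sum>b<k. cinner (v a) (X a b *v v b)))"

text \<open>Quantum operation: complex-linear, completely positive (id_k \<otimes> E positive for
  every ancilla dimension k), trace preserving.\<close>
definition quantum_operation :: "(complex^'n^'n \<Rightarrow> complex^'n^'n) \<Rightarrow> bool" where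
  "quantum_operation E \<longleftrightarrow>
     (\<forall>A B. E (A + B) = E A + E B) \<and>
     (\<forall>c A. E (cscale c A) = cscale c (E A)) \<and>
     (\<forall>k X. block_psd k X \<longrightarrow> block_psd k (\<lambda>a b. E (X a b))) \<and>
     (\<forall>A. trace (E A) = trace A)"

end

theory Submission
  imports Defs
begin

lemma cinner_add_left: "cinner (x+y) z = cinner x z + cinner y z"
  unfolding cinner_def by (simp add: algebra_simps sum.distrib)
lemma cinner_add_right: "cinner x (y+z) = cinner x y + cinner x z"
  unfolding cinner_def by (simp add: algebra_simps sum.distrib)
lemma cinner_diff_left: "cinner (x-y) z = cinner x z - cinner y z"
  unfolding cinner_def by (simp add: algebra_simps sum_subtractf)
lemma cinner_diff_right: "cinner x (y-z) = cinner x y - cinner x z"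
  unfolding cinner_def by (simp add: algebra_simps sum_subtractf)
lemma cinner_minus_left: "cinner (-x) z = - cinner x z"
  unfolding cinner_def by (simp add: sum_negf)
lemma cinner_minus_right: "cinner x (-z) = - cinner x z"
  unfolding cinner_def by (simp add: sum_negf)
lemma cinner_scale_left: "cinner (c *s x) y = cnj c * cinner x y"
  unfolding cinner_def by (simp add: sum_distrib_left mult.assoc)
lemma cinner_scale_right: "cinner x (c *s y) = c * cinner x y"
  unfolding cinner_def by (simp add: sum_distrib_left algebra_simps)
lemma cinner_zero_left[simp]: "cinner 0 y = 0"
  unfolding cinner_def by simp
lemma cinner_zero_right[simp]: "cinner x 0 = 0"
  unfolding cinner_def by simp
lemma cinner_sum_left: "cinner (sum f S) y = (\<Sum>i\<in>S. cinner (f i) y)"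
  unfolding cinner_def by (simp add: sum_component sum_distrib_right sum_distrib_left cnj_sum) (rule sum.swap)
lemma cinner_sum_right: "cinner x (sum f S) = (\<Sum>i\<in>S. cinner x (f i))"
  unfolding cinner_def by (simp add: sum_component sum_distrib_left) (rule sum.swap)
lemma cinner_commute: "cinner y x = cnj (cinner x y)"
  unfolding cinner_def by (simp add: cnj_sum mult.commute)
lemma cinner_adj: "cinner x (A *v y) = cinner (cadj A *v x) y"
  unfolding cinner_def cadj_def matrix_vector_mult_def
  by (simp add: sum_distrib_left sum_distrib_right cnj_sum mult.assoc mult.left_commute) (rule sum.swap)

lemmas cinner_simps = cinner_add_left cinner_add_right cinner_diff_left cinner_diff_right
  cinner_minus_left cinner_minus_right cinner_scale_left cinner_scale_right

lemma Re_cinner: "Re (cinner x y) = x \<bullet> y"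
  unfolding cinner_def inner_vec_def inner_complex_def by (simp add: Re_sum)

lemma cinner_self: "cinner x x = complex_of_real ((norm x)^2)"
proof -
  have "Im (cinner x x) = 0" unfolding cinner_def by (simp add: Im_sum algebra_simps)
  moreover have "Re (cinner x x) = (norm x)^2" by (simp add: Re_cinner power2_norm_eq_inner)
  ultimately show ?thesis by (simp add: complex_eq_iff)
qed

lemma cinner_self_eq_0[simp]: "cinner x x = 0 \<longleftrightarrow> x = 0"
  by (simp add: cinner_self)

lemma Re_cinner_self_ge0: "0 \<le> Re (cinner x x)"
  by (simp add: cinner_self)

lemma herm_adj: "hermitian H \<Longrightarrow> cinner (H *v x) y = cinner x (H *v y)"
  by (simp add: cinner_adj hermitian_def)

lemma herm_real: "hermitian H \<Longrightarrow> Im (cinner x (H *v x)) = 0"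
proof -
  assume h: "hermitian H"
  have "cinner x (H *v x) = cnj (cinner x (H *v x))"
    by (metis cinner_commute h herm_adj)
  then show ?thesis by (metis Reals_cnj_iff complex_is_Real_iff)
qed

lemma mv_scale: "A *v (c *s x) = c *s (A *v (x::complex^'n))"
  by (simp add: vec_eq_iff matrix_vector_mult_def sum_distrib_left mult.left_commute)

lemma cscale_mv: "cscale c A *v x = c *s (A *v x)"
  by (simp add: vec_eq_iff matrix_vector_mult_def cscale_def sum_distrib_left mult.assoc)

lemma sum_mv: "sum f S *v x = (\<Sum>i\<in>S. f i *v (x::complex^'n))"
  by (induction S rule: infinite_finite_induct) (auto simp: matrix_vector_mult_add_rdistrib)

lemma mv_sum: "A *v sum f S = (\<Sum>i\<in>S. A *v (f i::complex^'n))"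
  by (induction S rule: infinite_finite_induct) (auto simp: matrix_vector_right_distrib)

lemma mm_mv: "(A ** B) *v x = A *v (B *v (x::complex^'n))"
  by (simp add: matrix_vector_mul_assoc)

lemma outer_mv: "outer u v *v x = cinner v x *s u"
  by (simp add: vec_eq_iff matrix_vector_mult_def outer_def cinner_def sum_distrib_left mult.commute mult.left_commute)

lemma mat1_mv: "mat 1 *v x = (x::complex^'n)" by simp

lemma minus_mv: "(- A) *v x = - (A *v (x::complex^'n))"
  by (simp add: vec_eq_iff matrix_vector_mult_def sum_negf)

lemma mv_minus: "A *v (- x) = - (A *v (x::complex^'n))"
  by (simp add: vec_eq_iff matrix_vector_mult_def sum_negf)

lemma cadj_mv_herm: "hermitian H \<Longrightarrow> cadj H = H" by (simp add: hermitian_def)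

lemma cinner_axis: "cinner (axis i 1) (A *v axis j 1) = A$i$j"
  unfolding cinner_def matrix_vector_mult_def axis_def
  by (simp add: if_distrib if_distribR sum.delta cong: if_cong)

lemma scale_sum: "c *s sum f S = (\<Sum>i\<in>S. c *s (f i::complex^'n))"
  by (simp add: sum_cmul)

lemma psd_hermitian: assumes "psd A" shows "hermitian A"
proof -
  have q: "Im (cinner v (A *v v)) = 0" for v using assms unfolding psd_def by blast
  have ex: "cinner (axis i 1 + c *s axis j 1) (A *v (axis i 1 + c *s axis j 1))
        = A$i$i + c * A$i$j + cnj c * A$j$i + cnj c * c * A$j$j" for i j c
  proof -
    have "A *v (axis i 1 + c *s axis j 1) = A *v axis i 1 + c *s (A *v axis j 1)"
      by (simp add: matrix_vector_right_distrib mv_scale)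
    then show ?thesis
      by (simp only: cinner_add_left cinner_add_right cinner_scale_left cinner_scale_right cinner_axis)
         (simp add: algebra_simps)
  qed
  have d: "Im (A$i$i) = 0" for i using q[of "axis i 1"] by (simp add: cinner_axis)
  have s: "A$i$j = cnj (A$j$i)" for i j
  proof -
    have 1: "Im (A$i$j + A$j$i) = 0" using q[of "axis i 1 + 1 *s axis j 1"] ex[of i 1 j] d[of i] d[of j] by simp
    have 2: "Re (A$i$j) - Re (A$j$i) = 0" using q[of "axis i 1 + \<i> *s axis j 1"] ex[of i \<i> j] d[of i] d[of j] by simp
    from 1 2 show ?thesis by (simp add: complex_eq_iff)
  qed
  show ?thesis unfolding hermitian_def cadj_def vec_eq_iff
    by (simp only: vec_lambda_beta) (metis s complex_cnj_cnj)
qed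

definition eig :: "complex^'n^'n \<Rightarrow> real \<Rightarrow> complex^'n \<Rightarrow> bool" where
  "eig H \<mu> v \<longleftrightarrow> H *v v = complex_of_real \<mu> *s v"

lemma scaleR_vec_c: "r *\<^sub>R (x::complex^'n) = complex_of_real r *s x"
  by (simp add: vec_eq_iff) (simp add: scaleR_conv_of_real)

lemma eig_0[simp]: "eig H \<mu> 0" by (simp add: eig_def)
lemma eig_add: "eig H \<mu> x \<Longrightarrow> eig H \<mu> y \<Longrightarrow> eig H \<mu> (x + y)"
  by (simp add: eig_def matrix_vector_right_distrib vector_add_ldistrib)
lemma eig_scale: "eig H \<mu> x \<Longrightarrow> eig H \<mu> (c *s x)"
  by (simp add: eig_def mv_scale vector_smult_assoc mult.commute)
lemma eig_scaleR: "eig H \<mu> x \<Longrightarrow> eig H \<mu> (c *\<^sub>R x)"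
  by (simp add: scaleR_vec_c eig_scale)

lemma eig_orth:
  assumes h: "hermitian H" and "eig H \<mu> v" "eig H \<nu> w" "\<mu> \<noteq> \<nu>"
  shows "cinner v w = 0"
proof -
  have "cinner v (H *v w) = complex_of_real \<nu> * cinner v w"
    using assms by (simp add: eig_def cinner_scale_right)
  moreover have "cinner (H *v v) w = complex_of_real \<mu> * cinner v w"
    using assms by (simp add: eig_def cinner_scale_left)
  ultimately have "(complex_of_real \<nu> - complex_of_real \<mu>) * cinner v w = 0"
    using herm_adj[OF h, of v w] by (simp add: algebra_simps)
  then show ?thesis using assms(4) by simp
qed

lemma sum_upd: "finite L \<Longrightarrow> \<mu> \<in> L \<Longrightarrow> (\<Sum>\<nu>\<in>L. (f(\<mu> := a)) \<nu>) = (\<Sum>\<nu>\<in>L. f \<nu>) - f \<mu> + (a::'a::ab_group_add)"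
  by (simp add: sum.remove)

definition decomp :: "complex^'n^'n \<Rightarrow> complex^'n \<Rightarrow> bool" where
  "decomp H v \<longleftrightarrow> (\<exists>L f. finite L \<and> v = (\<Sum>\<mu>\<in>L. f \<mu>) \<and> (\<forall>\<mu>. eig H \<mu> (f \<mu>)))"

lemma decomp_span:
  assumes "v \<in> span {v. \<exists>\<mu>. eig H \<mu> v}"
  shows "decomp H v"
  using assms
proof (induction rule: span_induct_alt)
  case base
  then show ?case unfolding decomp_def by (rule exI[of _ "{}"], rule exI[of _ "\<lambda>_. 0"]) auto
next
  case (step c x y)
  from step(1) obtain \<mu> where ex: "eig H \<mu> x" by auto
  from step(2) obtain L f where L: "finite L" "y = (\<Sum>\<mu>\<in>L. f \<mu>)" "\<forall>\<mu>. eig H \<mu> (f \<mu>)"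
    unfolding decomp_def by blast
  show ?case
  proof (cases "\<mu> \<in> L")
    case True
    let ?g = "f(\<mu> := f \<mu> + c *\<^sub>R x)"
    have "c *\<^sub>R x + y = (\<Sum>\<nu>\<in>L. ?g \<nu>)"
      using L True by (simp only: sum_upd) (simp add: algebra_simps)
    moreover have "\<forall>\<nu>. eig H \<nu> (?g \<nu>)" using L ex by (simp add: eig_add eig_scaleR)
    ultimately show ?thesis unfolding decomp_def using L by blast
  next
    case False
    let ?g = "f(\<mu> := c *\<^sub>R x)"
    have "c *\<^sub>R x + y = (\<Sum>\<nu>\<in>insert \<mu> L. ?g \<nu>)"
      using L False by (simp add: sum.insert) (intro sum.cong, auto)
    moreover have "\<forall>\<nu>. eig H \<nu> (?g \<nu>)" using L ex by (simp add: eig_add eig_scaleR)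
    ultimately show ?thesis unfolding decomp_def using L by blast
  qed
qed



lemma decomp_scale_span: "decomp H v \<Longrightarrow> c *s v \<in> span {v. \<exists>\<mu>. eig H \<mu> v}"
  unfolding decomp_def
  apply clarify
  apply (simp add: scale_sum)
  apply (rule span_sum)
  apply (rule span_base)
  using eig_scale by blast


lemma decomp_H_span: "decomp H v \<Longrightarrow> H *v v \<in> span {v. \<exists>\<mu>. eig H \<mu> v}"
  unfolding decomp_def
proof clarify
  fix L :: "real set" and f assume "finite L" "\<forall>\<mu>. eig H \<mu> (f \<mu>)"
  then have "eig H \<mu> (H *v f \<mu>)" for \<mu>
    by (simp add: eig_def mv_scale vector_smult_assoc)
  then show "H *v sum f L \<in> span {v. \<exists>\<mu>. eig H \<mu> v}"
    by (simp add: mv_sum) (intro span_sum span_base, blast)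
qed
lemma norm_cscale: "norm (c *s (x::complex^'n)) = cmod c * norm x"
  by (simp add: norm_vec_def L2_set_def norm_mult power_mult_distrib sum_distrib_left[symmetric] real_sqrt_mult)

lemma real_quad_zero:
  fixes m K :: real
  assumes "\<forall>t. 2*t*m \<le> t^2 * K" "m \<ge> 0"
  shows "m = 0"
proof (rule ccontr)
  assume "m \<noteq> 0" then have mp: "m > 0" using assms by simp
  define t where "t = m / (\<bar>K\<bar> + 1)"
  have tp: "t > 0" using mp by (simp add: t_def)
  have "2*t*m \<le> t^2 * K" using assms by blast
  also have "\<dots> \<le> t^2 * \<bar>K\<bar>" by (simp add: mult_left_mono)
  finally have "2*m \<le> t * \<bar>K\<bar>" using tp by (simp add: power2_eq_square)
  also have "t * \<bar>K\<bar> < m" unfolding t_def using mp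
    by (simp add: field_simps)
  finally show False using mp by simp
qed

lemma span_full:
  assumes h: "hermitian H"
  shows "span {v. \<exists>\<mu>. eig H \<mu> v} = UNIV"
proof (rule ccontr)
  let ?E = "{v. \<exists>\<mu>. eig H \<mu> v}"
  assume ne: "span ?E \<noteq> UNIV"
  have "dim ?E \<noteq> DIM(complex^'a)" using ne dim_eq_full by blast
  then have "dim ?E < DIM(complex^'a)" using dim_subset_UNIV[of ?E] by simp
  then obtain z where z0: "z \<noteq> 0" and zo: "\<And>y. y \<in> span ?E \<Longrightarrow> orthogonal z y"
    by (rule orthogonal_to_subspace_exists) blast
  define V where "V = {x. \<forall>y \<in> span ?E. cinner y x = 0}"
  have zV: "z \<in> V"
  proof -
    have "cinner y z = 0" if y: "y \<in> span ?E" for y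
    proof -
      have "Re (cinner y z) = 0" using zo[OF y] by (simp add: Re_cinner orthogonal_def inner_commute)
      moreover have "\<i> *s y \<in> span ?E" using decomp_scale_span[OF decomp_span[OF y]] .
      then have "Re (cinner (\<i> *s y) z) = 0" using zo[of "\<i> *s y"] by (simp add: Re_cinner orthogonal_def inner_commute[of z])
      then have "Im (cinner y z) = 0" by (simp add: cinner_scale_left)
      ultimately show ?thesis by (simp add: complex_eq_iff)
    qed
    then show ?thesis by (simp add: V_def)
  qed
  have V_add: "x \<in> V \<Longrightarrow> y \<in> V \<Longrightarrow> x - y \<in> V" for x y by (simp add: V_def cinner_diff_right)
  have V_scale: "x \<in> V \<Longrightarrow> c *s x \<in> V" for x c by (simp add: V_def cinner_scale_right)
  have V_H: "x \<in> V \<Longrightarrow> H *v x \<in> V" for x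
    unfolding V_def
  proof clarify
    fix y assume "\<forall>y\<in>span ?E. cinner y x = 0" "y \<in> span ?E"
    moreover have "H *v y \<in> span ?E" using decomp_H_span[OF decomp_span] \<open>y \<in> span ?E\<close> by blast
    ultimately show "cinner y (H *v x) = 0" using herm_adj[OF h, of y x] by simp
  qed
  have V_closed: "closed V"
  proof -
    have "closed {x. y \<in> span ?E \<longrightarrow> cinner y x = 0}" for y
    proof (cases "y \<in> span ?E")
      case True
      have "continuous_on UNIV (\<lambda>x. cinner y x)"
        unfolding cinner_def by (intro continuous_intros)
      then have "closed {x. cinner y x = 0}" by (intro closed_Collect_eq) (auto intro: continuous_intros)
      then show ?thesis using True by simp
    qed simp
    then have "closed {x. \<forall>y. y \<in> span ?E \<longrightarrow> cinner y x = 0}" by (rule closed_Collect_all)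
    then show ?thesis unfolding V_def by (simp add: Ball_def)
  qed
  define q where "q x = Re (cinner x (H *v x))" for x
  define S where "S = V \<inter> sphere 0 1"
  have cS: "compact S" unfolding S_def using V_closed by (intro closed_Int_compact compact_sphere)
  have "complex_of_real (1 / norm z) *s z \<in> S" unfolding S_def using z0 zV V_scale by (simp add: norm_cscale norm_divide)
  then have Sne: "S \<noteq> {}" by blast
  have "continuous_on S q"
    unfolding q_def cinner_def matrix_vector_mult_def by (intro continuous_intros)
  then obtain w where wS: "w \<in> S" and wmax: "\<And>y. y \<in> S \<Longrightarrow> q y \<le> q w"
    using continuous_attains_sup[OF cS Sne] by blast
  define lam where "lam = q w"
  have wV: "w \<in> V" and wn: "norm w = 1" using wS by (auto simp: S_def)
  have ww: "cinner w w = 1" using wn by (simp add: cinner_self)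
  have qle: "q x \<le> lam * (norm x)^2" if xV: "x \<in> V" for x
  proof (cases "x = 0")
    case True then show ?thesis by (simp add: q_def)
  next
    case False
    let ?r = "1 / norm x"
    have "complex_of_real ?r *s x \<in> S" using xV V_scale False by (simp add: S_def norm_cscale norm_divide)
    then have "q (complex_of_real ?r *s x) \<le> lam" using wmax by (simp add: lam_def)
    moreover have "q (complex_of_real ?r *s x) = ?r^2 * q x"
      by (simp add: q_def mv_scale cinner_scale_left cinner_scale_right power2_eq_square)
    ultimately have "?r^2 * q x \<le> lam" by simp
    then show ?thesis using False by (simp add: field_simps)
  qed
  have lr: "cinner w (H *v w) = complex_of_real lam"
    using herm_real[OF h, of w] by (simp add: lam_def q_def complex_eq_iff)
  define u where "u = H *v w - complex_of_real lam *s w"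
  have uV: "u \<in> V" unfolding u_def using wV by (intro V_add V_scale V_H)
  have wu: "cinner w u = 0" unfolding u_def by (simp add: cinner_simps lr ww)
  have uw: "cinner u w = 0" using wu by (metis cinner_commute complex_cnj_zero)
  have Hw: "H *v w = u + complex_of_real lam *s w" unfolding u_def by simp
  define m where "m = Re (cinner u u)"
  have m0: "m \<ge> 0" by (simp add: m_def Re_cinner_self_ge0)
  have um: "cinner u u = complex_of_real m" by (simp add: m_def cinner_self)
  have c1: "cinner u (H *v w) = complex_of_real m"
    by (simp add: Hw cinner_simps uw m_def cinner_self)
  have c2: "cinner w (H *v u) = complex_of_real m"
    by (simp add: herm_adj[OF h, symmetric] Hw cinner_simps wu m_def cinner_self)
  have "2*t*m \<le> t^2 * (lam * m - q u)" for t
  proof -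
    let ?x = "w + complex_of_real t *s u"
    have xV: "?x \<in> V" using wV uV V_scale V_add[of w "- (complex_of_real t *s u)"]
      by (simp add: V_def cinner_simps)
    have qx: "q ?x = lam + 2*t*m + t^2 * q u"
      by (simp add: q_def matrix_vector_right_distrib mv_scale cinner_simps c1 c2 lr power2_eq_square) (simp add: algebra_simps)
    have nx: "(norm ?x)^2 = 1 + t^2 * m"
    proof -
      have "cinner ?x ?x = 1 + complex_of_real (t^2 * m)"
        by (simp add: cinner_simps ww wu uw um power2_eq_square)
      then have "Re (cinner ?x ?x) = 1 + t^2 * m" by simp
      then show ?thesis by (simp add: cinner_self)
    qed
    show ?thesis using qle[OF xV] qx nx by (simp add: algebra_simps)
  qed
  then have "m = 0" using real_quad_zero m0 by blast
  then have "u = 0" by (simp add: m_def cinner_self)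
  then have "eig H lam w" unfolding eig_def using Hw by simp
  then have "w \<in> span ?E" by (auto intro: span_base)
  then have "cinner w w = 0" using wV by (simp add: V_def)
  then show False using ww by simp
qed

definition spec :: "complex^'n^'n \<Rightarrow> real set" where
  "spec H = {\<mu>. \<exists>v. v \<noteq> 0 \<and> eig H \<mu> v}"

lemma eig_not_spec: "eig H \<mu> v \<Longrightarrow> \<mu> \<notin> spec H \<Longrightarrow> v = 0"
  by (auto simp: spec_def)

lemma finite_spec:
  assumes h: "hermitian H" shows "finite (spec H)"
proof -
  define g where "g \<mu> = (SOME v. v \<noteq> 0 \<and> eig H \<mu> v)" for \<mu>
  have g: "g \<mu> \<noteq> 0 \<and> eig H \<mu> (g \<mu>)" if "\<mu> \<in> spec H" for \<mu>
    using that unfolding g_def spec_def by (metis (mono_tags, lifting) mem_Collect_eq someI_ex)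
  have inj: "inj_on g (spec H)"
  proof (rule inj_onI)
    fix a b assume a: "a \<in> spec H" and b: "b \<in> spec H" and e: "g a = g b"
    show "a = b"
    proof (rule ccontr)
      assume "a \<noteq> b"
      then have "cinner (g a) (g b) = 0" using eig_orth[OF h] g[OF a] g[OF b] by blast
      then show False using e g[OF a] by simp
    qed
  qed
  have "pairwise orthogonal (g ` spec H)"
    unfolding pairwise_def orthogonal_def
  proof clarify
    fix a b assume a: "a \<in> spec H" and b: "b \<in> spec H" and ne: "g a \<noteq> g b"
    then have "a \<noteq> b" by auto
    then have "cinner (g a) (g b) = 0" using eig_orth[OF h] g[OF a] g[OF b] by blast
    then show "g a \<bullet> g b = 0" by (metis Re_cinner zero_complex.simps(1))
  qed
  moreover have "0 \<notin> g ` spec H" using g by auto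
  ultimately have "independent (g ` spec H)" by (rule pairwise_orthogonal_independent)
  then have "finite (g ` spec H)" using independent_bound by blast
  then show ?thesis using inj finite_imageD by blast
qed

lemma decomp_spec:
  assumes h: "hermitian H"
  shows "\<exists>f. v = (\<Sum>\<mu>\<in>spec H. f \<mu>) \<and> (\<forall>\<mu>. eig H \<mu> (f \<mu>))"
proof -
  have "decomp H v" using span_full[OF h] decomp_span by blast
  then obtain L f where L: "finite L" "v = (\<Sum>\<mu>\<in>L. f \<mu>)" "\<forall>\<mu>. eig H \<mu> (f \<mu>)"
    unfolding decomp_def by blast
  define g where "g \<mu> = (if \<mu> \<in> L then f \<mu> else 0)" for \<mu>
  have fz: "f \<mu> = 0" if "\<mu> \<notin> spec H" for \<mu> using eig_not_spec L(3) that by blast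
  have "v = (\<Sum>\<mu>\<in>L. g \<mu>)"
    unfolding L(2) g_def by (rule sum.cong) auto
  also have "\<dots> = (\<Sum>\<mu>\<in>L \<union> spec H. g \<mu>)"
    using L(1) finite_spec[OF h]
    by (intro sum.mono_neutral_left) (auto simp: g_def)
  also have "\<dots> = (\<Sum>\<mu>\<in>spec H. g \<mu>)"
    using L(1) finite_spec[OF h] fz
    by (intro sum.mono_neutral_left[symmetric]) (auto simp: g_def)
  finally show ?thesis using L(3) by (intro exI[of _ g]) (auto simp: g_def)
qed

lemma decomp_unique:
  assumes h: "hermitian H" and L: "finite L"
    and e: "(\<Sum>\<mu>\<in>L. f \<mu>) = (\<Sum>\<mu>\<in>L. g \<mu>)"
    and f: "\<forall>\<mu>. eig H \<mu> (f \<mu>)" and g: "\<forall>\<mu>. eig H \<mu> (g \<mu>)" and m: "\<mu> \<in> L"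
  shows "f \<mu> = g \<mu>"
proof -
  define d where "d \<nu> = f \<nu> - g \<nu>" for \<nu>
  have de: "eig H \<nu> (d \<nu>)" for \<nu>
    using f g unfolding d_def eig_def by (simp add: matrix_vector_mult_diff_distrib vector_ssub_ldistrib)
  have "(\<Sum>\<nu>\<in>L. d \<nu>) = 0" using e by (simp add: d_def sum_subtractf)
  then have "0 = cinner (d \<mu>) (\<Sum>\<nu>\<in>L. d \<nu>)" by simp
  also have "\<dots> = (\<Sum>\<nu>\<in>L. cinner (d \<mu>) (d \<nu>))" by (rule cinner_sum_right)
  also have "\<dots> = cinner (d \<mu>) (d \<mu>)"
    using L m eig_orth[OF h de de] by (subst sum.remove[OF L m]) (auto intro!: sum.neutral)
  finally have "d \<mu> = 0" by simp
  then show ?thesis by (simp add: d_def)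
qed

definition ecomp :: "complex^'n^'n \<Rightarrow> real \<Rightarrow> complex^'n \<Rightarrow> complex^'n" where
  "ecomp H \<mu> v = (SOME f. v = (\<Sum>\<nu>\<in>spec H. f \<nu>) \<and> (\<forall>\<nu>. eig H \<nu> (f \<nu>))) \<mu>"

context
  fixes H :: "complex^'n^'n"
  assumes h: "hermitian H"
begin

lemma comp_prop: "v = (\<Sum>\<nu>\<in>spec H. ecomp H \<nu> v) \<and> (\<forall>\<nu>. eig H \<nu> (ecomp H \<nu> v))"
  unfolding ecomp_def using someI_ex[OF decomp_spec[OF h, of v]] by blast

lemma comp_sum: "(\<Sum>\<nu>\<in>spec H. ecomp H \<nu> v) = v" using comp_prop by metis
lemma comp_eig: "eig H \<nu> (ecomp H \<nu> v)" using comp_prop by blast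
lemma comp_H: "H *v ecomp H \<nu> v = complex_of_real \<nu> *s ecomp H \<nu> v"
  using comp_eig eig_def by blast

lemma comp_zero: "\<mu> \<notin> spec H \<Longrightarrow> ecomp H \<mu> v = 0"
  using comp_eig eig_not_spec by blast

lemma comp_eq:
  assumes "v = (\<Sum>\<nu>\<in>spec H. f \<nu>)" "\<forall>\<nu>. eig H \<nu> (f \<nu>)"
  shows "ecomp H \<mu> v = f \<mu>"
proof (cases "\<mu> \<in> spec H")
  case True
  show ?thesis
    by (rule decomp_unique[OF h finite_spec[OF h] _ _ assms(2) True])
       (use assms(1) comp_sum comp_eig in auto)
next
  case False
  then show ?thesis using comp_zero assms(2) eig_not_spec by metis
qed

lemma comp_add: "ecomp H \<mu> (x + y) = ecomp H \<mu> x + ecomp H \<mu> y"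
  by (rule comp_eq) (auto simp: sum.distrib comp_sum intro: eig_add comp_eig)

lemma comp_scale: "ecomp H \<mu> (c *s x) = c *s ecomp H \<mu> x"
  by (rule comp_eq) (auto simp: scale_sum[symmetric] comp_sum intro: eig_scale comp_eig)

lemma comp_0: "ecomp H \<mu> 0 = 0"
  by (rule comp_eq) auto

lemma comp_sumlin: "ecomp H \<mu> (\<Sum>j\<in>S. g j) = (\<Sum>j\<in>S. ecomp H \<mu> (g j))"
  by (induction S rule: infinite_finite_induct) (auto simp: comp_0 comp_add)

lemma comp_eigvec: "eig H \<nu> v \<Longrightarrow> ecomp H \<mu> v = (if \<mu> = \<nu> then v else 0)"
proof (cases "\<nu> \<in> spec H")
  case True
  assume e: "eig H \<nu> v"
  show ?thesis
    by (rule comp_eq) (use True e finite_spec[OF h] in \<open>auto simp: sum.delta\<close>)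
next
  case False
  assume e: "eig H \<nu> v"
  then have "v = 0" using False eig_not_spec by blast
  then show ?thesis by (simp add: comp_0)
qed

lemma comp_comp: "ecomp H \<mu> (ecomp H \<nu> x) = (if \<mu> = \<nu> then ecomp H \<nu> x else 0)"
  using comp_eigvec[OF comp_eig] by blast

lemma comp_orth: "\<mu> \<noteq> \<nu> \<Longrightarrow> cinner (ecomp H \<mu> x) (ecomp H \<nu> y) = 0"
  using eig_orth[OF h comp_eig comp_eig] by blast

lemma comp_adj: "cinner (ecomp H \<mu> x) y = cinner x (ecomp H \<mu> y)"
proof -
  have "cinner (ecomp H \<mu> x) y = (\<Sum>\<nu>\<in>spec H. cinner (ecomp H \<mu> x) (ecomp H \<nu> y))"
    by (subst comp_sum[symmetric, of y]) (simp add: cinner_sum_right)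
  also have "\<dots> = cinner (ecomp H \<mu> x) (ecomp H \<mu> y)"
  proof (cases "\<mu> \<in> spec H")
    case True then show ?thesis
      by (subst sum.remove[OF finite_spec[OF h] True]) (auto intro!: sum.neutral comp_orth)
  next
    case False then show ?thesis by (auto intro!: sum.neutral comp_orth simp: comp_zero)
  qed
  also have "\<dots> = (\<Sum>\<nu>\<in>spec H. cinner (ecomp H \<nu> x) (ecomp H \<mu> y))"
  proof (cases "\<mu> \<in> spec H")
    case True then show ?thesis
      by (subst sum.remove[OF finite_spec[OF h] True]) (auto intro!: sum.neutral comp_orth)
  next
    case False then show ?thesis by (auto intro!: sum.neutral comp_orth simp: comp_zero)
  qed
  also have "\<dots> = cinner x (ecomp H \<mu> y)"
    by (subst (2) comp_sum[symmetric, of x]) (simp add: cinner_sum_left)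
  finally show ?thesis .
qed

definition Pr :: "real \<Rightarrow> complex^'n^'n" where
  "Pr \<mu> = (\<chi> i j. ecomp H \<mu> (axis j 1) $ i)"

lemma Pr_mv: "Pr \<mu> *v x = ecomp H \<mu> x"
proof -
  have "ecomp H \<mu> x = ecomp H \<mu> (\<Sum>j\<in>UNIV. x$j *s axis j 1)" by (simp add: basis_expansion)
  also have "\<dots> = (\<Sum>j\<in>UNIV. x$j *s ecomp H \<mu> (axis j 1))" by (simp add: comp_sumlin comp_scale)
  finally show ?thesis
    by (simp add: vec_eq_iff Pr_def matrix_vector_mult_def sum_component mult.commute)
qed

end

lemma cscale_cscale: "cscale a (cscale b K) = cscale (a * b) K"
  by (simp add: cscale_def vec_eq_iff mult.assoc)

lemma cscale_sum: "cscale a (\<Sum>i\<in>S. f i) = (\<Sum>i\<in>S. cscale a (f i))"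
  by (induction S rule: infinite_finite_induct)
     (auto simp: cscale_def vec_eq_iff distrib_left)

lemma cscale_add_left: "cscale (a + b) K = cscale a K + cscale b K"
  by (simp add: cscale_def vec_eq_iff distrib_right)

lemma bl_cscale: "bounded_linear (\<lambda>c. cscale c K)"
proof -
  have "linear (\<lambda>c. cscale c K)"
    by (rule linearI) (simp_all add: cscale_def vec_eq_iff distrib_right mult_scaleR_left)
  then show ?thesis using linear_conv_bounded_linear by blast
qed

lemma cadj_eq:
  assumes "\<And>x y. cinner (B *v x) y = cinner x (A *v y)"
  shows "cadj A = B"
proof -
  have "cadj A *v x = B *v x" for x
  proof -
    have "cinner (cadj A *v x - B *v x) y = 0" for y
      using assms[of x y] by (simp add: cinner_diff_left cinner_adj)
    from this[of "cadj A *v x - B *v x"] show ?thesis by simp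
  qed
  then show ?thesis by (simp add: matrix_eq)
qed

context
  fixes H :: "complex^'n^'n"
  assumes h: "hermitian H"
begin

lemma mpow_comp: "mpow (cscale z H) k *v ecomp H \<mu> x = (z * complex_of_real \<mu>)^k *s ecomp H \<mu> x"
  by (induction k) (simp_all add: mm_mv cscale_mv comp_H[OF h] mv_scale vector_smult_assoc mult_ac)

lemma mpow_eq: "mpow (cscale z H) k = (\<Sum>\<mu>\<in>spec H. cscale ((z * complex_of_real \<mu>)^k) (Pr H \<mu>))"
proof -
  have "mpow (cscale z H) k *v x = (\<Sum>\<mu>\<in>spec H. cscale ((z * complex_of_real \<mu>)^k) (Pr H \<mu>)) *v x" for x
  proof -
    have "mpow (cscale z H) k *v x = mpow (cscale z H) k *v (\<Sum>\<mu>\<in>spec H. ecomp H \<mu> x)"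
      by (simp add: comp_sum[OF h])
    then show ?thesis by (simp add: mv_sum sum_mv mpow_comp cscale_mv Pr_mv[OF h])
  qed
  then show ?thesis by (simp add: matrix_eq)
qed

lemma mexp_eq: "mexp (cscale z H) = (\<Sum>\<mu>\<in>spec H. cscale (exp (z * complex_of_real \<mu>)) (Pr H \<mu>))"
proof -
  have "(\<lambda>k. cscale (1 / of_nat (fact k)) (mpow (cscale z H) k))
      = (\<lambda>k. \<Sum>\<mu>\<in>spec H. cscale ((z * complex_of_real \<mu>)^k /\<^sub>R fact k) (Pr H \<mu>))"
    by (simp add: mpow_eq cscale_sum cscale_cscale scaleR_conv_of_real divide_inverse mult.commute)
  moreover have "(\<lambda>k. \<Sum>\<mu>\<in>spec H. cscale ((z * complex_of_real \<mu>)^k /\<^sub>R fact k) (Pr H \<mu>))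
      sums (\<Sum>\<mu>\<in>spec H. cscale (exp (z * complex_of_real \<mu>)) (Pr H \<mu>))"
    by (intro sums_sum bounded_linear.sums[OF bl_cscale] exp_converges)
  ultimately show ?thesis unfolding mexp_def by (simp add: sums_iff)
qed

lemma Pr_mult: "Pr H \<mu> ** Pr H \<nu> = (if \<mu> = \<nu> then Pr H \<mu> else 0)"
  by (simp add: matrix_eq mm_mv Pr_mv[OF h] comp_comp[OF h])

lemma Pr_sum: "(\<Sum>\<mu>\<in>spec H. Pr H \<mu>) = mat 1"
  by (simp add: matrix_eq sum_mv Pr_mv[OF h] comp_sum[OF h])

lemma cadj_Pr: "cadj (Pr H \<mu>) = Pr H \<mu>"
  by (rule cadj_eq) (simp add: Pr_mv[OF h] comp_adj[OF h])

end

definition Rm :: "complex^'n^'n \<Rightarrow> real measure \<Rightarrow> complex^'n^'n \<Rightarrow> complex^'n^'n" where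
  "Rm H D \<sigma> = (\<Sum>\<mu>\<in>spec H. \<Sum>\<nu>\<in>spec H. cscale (char D (\<nu> - \<mu>)) (Pr H \<mu> ** \<sigma> ** Pr H \<nu>))"

lemma Rm_mv: "hermitian H \<Longrightarrow> Rm H D \<sigma> *v x =
   (\<Sum>\<mu>\<in>spec H. \<Sum>\<nu>\<in>spec H. char D (\<nu> - \<mu>) *s ecomp H \<mu> (\<sigma> *v ecomp H \<nu> x))"
  by (simp add: Rm_def sum_mv cscale_mv mm_mv Pr_mv)

lemma integrand_eq:
  assumes h: "hermitian H"
  shows "mexp (cscale (- \<i> * complex_of_real s) H) ** \<rho> ** mexp (cscale (\<i> * complex_of_real s) H)
    = (\<Sum>\<mu>\<in>spec H. \<Sum>\<nu>\<in>spec H. cscale (exp (\<i> * complex_of_real ((\<nu> - \<mu>) * s))) (Pr H \<mu> ** \<rho> ** Pr H \<nu>))"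
proof -
  define a where "a \<mu> = exp ((- \<i> * complex_of_real s) * complex_of_real \<mu>)" for \<mu>
  define b where "b \<mu> = exp ((\<i> * complex_of_real s) * complex_of_real \<mu>)" for \<mu>
  have A: "mexp (cscale (- \<i> * complex_of_real s) H) = (\<Sum>\<mu>\<in>spec H. cscale (a \<mu>) (Pr H \<mu>))"
    unfolding a_def by (rule mexp_eq[OF h])
  have B: "mexp (cscale (\<i> * complex_of_real s) H) = (\<Sum>\<mu>\<in>spec H. cscale (b \<mu>) (Pr H \<mu>))"
    unfolding b_def by (rule mexp_eq[OF h])
  have e: "a \<mu> * b \<nu> = exp (\<i> * complex_of_real ((\<nu> - \<mu>) * s))" for \<mu> \<nu>
    unfolding a_def b_def by (simp add: exp_add[symmetric] algebra_simps)
  have "(mexp (cscale (- \<i> * complex_of_real s) H) ** \<rho> ** mexp (cscale (\<i> * complex_of_real s) H)) *v x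
    = (\<Sum>\<mu>\<in>spec H. a \<mu> *s ecomp H \<mu> (\<rho> *v (\<Sum>\<nu>\<in>spec H. b \<nu> *s ecomp H \<nu> x)))" for x
    unfolding A B by (simp add: mm_mv sum_mv cscale_mv Pr_mv[OF h])
  also have "\<dots> x = (\<Sum>\<mu>\<in>spec H. \<Sum>\<nu>\<in>spec H. (a \<mu> * b \<nu>) *s ecomp H \<mu> (\<rho> *v ecomp H \<nu> x))" for x
    by (simp add: mv_sum mv_scale comp_sumlin[OF h] comp_scale[OF h] scale_sum vector_smult_assoc)
  also have "\<dots> x = (\<Sum>\<mu>\<in>spec H. \<Sum>\<nu>\<in>spec H. cscale (exp (\<i> * complex_of_real ((\<nu> - \<mu>) * s))) (Pr H \<mu> ** \<rho> ** Pr H \<nu>)) *v x" for x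
    by (simp only: e sum_mv cscale_mv mm_mv Pr_mv[OF h])
  finally show ?thesis by (simp add: matrix_eq)
qed

lemma integral_R:
  assumes h: "hermitian H" and M: "prob_space M" and c: "c \<in> borel_measurable M"
  shows "(\<integral>x. mexp (cscale (- \<i> * complex_of_real (c x)) H) ** \<rho> ** mexp (cscale (\<i> * complex_of_real (c x)) H) \<partial>M)
    = Rm H (distr M borel c) \<rho>"
proof -
  have int: "integrable M (\<lambda>x. exp (\<i> * complex_of_real (t * c x)))" for t
    by (rule prob_space.integrable_iexp[OF M]) (use c in auto)
  have ch: "char (distr M borel c) t = (\<integral>x. exp (\<i> * complex_of_real (t * c x)) \<partial>M)" for t
    unfolding char_def by (subst integral_distr) (use c in auto)
  have "(\<integral>x. mexp (cscale (- \<i> * complex_of_real (c x)) H) ** \<rho> ** mexp (cscale (\<i> * complex_of_real (c x)) H) \<partial>M)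
     = (\<integral>x. (\<Sum>\<mu>\<in>spec H. \<Sum>\<nu>\<in>spec H. cscale (exp (\<i> * complex_of_real ((\<nu> - \<mu>) * c x))) (Pr H \<mu> ** \<rho> ** Pr H \<nu>)) \<partial>M)"
    by (intro Bochner_Integration.integral_cong refl integrand_eq[OF h])
  also have "\<dots> = (\<Sum>\<mu>\<in>spec H. \<Sum>\<nu>\<in>spec H. (\<integral>x. cscale (exp (\<i> * complex_of_real ((\<nu> - \<mu>) * c x))) (Pr H \<mu> ** \<rho> ** Pr H \<nu>) \<partial>M))"
  proof -
    have intK: "integrable M (\<lambda>x. cscale (exp (\<i> * complex_of_real (t * c x))) K)" for t K
      by (rule integrable_bounded_linear[OF bl_cscale int])
    show ?thesis
      apply (rule trans[OF Bochner_Integration.integral_sum[where f="\<lambda>\<mu> x. \<Sum>\<nu>\<in>spec H. cscale (exp (\<i> * complex_of_real ((\<nu> - \<mu>) * c x))) (Pr H \<mu> ** \<rho> ** Pr H \<nu>)"]])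
       apply (rule Bochner_Integration.integrable_sum, rule intK)
      apply (rule sum.cong[OF refl])
      apply (rule Bochner_Integration.integral_sum, rule intK)
      done
  qed
  also have "\<dots> = Rm H (distr M borel c) \<rho>"
    unfolding Rm_def ch
    by (intro sum.cong refl integral_bounded_linear[OF bl_cscale int])
  finally show ?thesis .
qed

lemma trace_cscale: "trace (cscale c A) = c * trace A"
  by (simp add: trace_def cscale_def sum_distrib_left)

lemma trace_sum: "trace (\<Sum>i\<in>S. f i) = (\<Sum>i\<in>S. trace (f i :: complex^'n^'n))"
  by (induction S rule: infinite_finite_induct) (auto simp: trace_add trace_0[simplified])

lemma trace_comm: "trace (A ** B) = trace (B ** (A :: complex^'n^'n))"
  unfolding trace_def matrix_matrix_mult_def by (simp add: mult.commute) (rule sum.swap)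

lemma sum_mm: "(\<Sum>i\<in>S. f i) ** A = (\<Sum>i\<in>S. f i ** (A::complex^'n^'n))"
  by (simp add: matrix_eq sum_mv mm_mv)

context
  fixes H :: "complex^'n^'n" and D :: "real measure"
  assumes h: "hermitian H" and D: "real_distribution D"
begin

lemma Rm_add: "Rm H D (A + B) = Rm H D A + Rm H D B"
  by (simp add: matrix_eq Rm_mv[OF h] matrix_vector_mult_add_rdistrib comp_add[OF h]
      vector_add_ldistrib sum.distrib matrix_vector_mult_add_rdistrib)

lemma Rm_scale: "Rm H D (cscale c A) = cscale c (Rm H D A)"
  by (simp add: matrix_eq Rm_mv[OF h] cscale_mv comp_scale[OF h] vector_smult_assoc
      mult.commute scale_sum)

lemma Rm_trace: "trace (Rm H D A) = trace A"
proof -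
  have t: "trace (Pr H \<mu> ** A ** Pr H \<nu>) = (if \<mu> = \<nu> then trace (Pr H \<mu> ** A) else 0)" for \<mu> \<nu>
  proof -
    have "trace (Pr H \<mu> ** A ** Pr H \<nu>) = trace (Pr H \<nu> ** (Pr H \<mu> ** A))" by (rule trace_comm)
    also have "\<dots> = trace ((Pr H \<nu> ** Pr H \<mu>) ** A)" by (simp add: matrix_mul_assoc)
    finally show ?thesis by (auto simp: Pr_mult[OF h] trace_0[simplified])
  qed
  have "trace (Rm H D A) = (\<Sum>\<mu>\<in>spec H. \<Sum>\<nu>\<in>spec H. char D (\<nu> - \<mu>) * (if \<mu> = \<nu> then trace (Pr H \<mu> ** A) else 0))"
    by (simp add: Rm_def trace_sum trace_cscale t)
  also have "\<dots> = (\<Sum>\<mu>\<in>spec H. trace (Pr H \<mu> ** A))"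
    using finite_spec[OF h] real_distribution.char_zero[OF D]
    by (simp add: if_distrib cong: if_cong)
  also have "\<dots> = trace ((\<Sum>\<mu>\<in>spec H. Pr H \<mu>) ** A)"
    by (simp add: sum_mm trace_sum)
  also have "\<dots> = trace A" by (simp add: Pr_sum[OF h])
  finally show ?thesis .
qed

end

lemma int_sum4:
  fixes f :: "'i \<Rightarrow> 'j \<Rightarrow> 'k \<Rightarrow> 'l \<Rightarrow> 'm \<Rightarrow> complex"
  assumes "\<And>a b \<mu> \<nu>. integrable D (f a b \<mu> \<nu>)"
  shows "integrable D (\<lambda>s. \<Sum>a\<in>A. \<Sum>b\<in>B. \<Sum>\<mu>\<in>L. \<Sum>\<nu>\<in>L'. f a b \<mu> \<nu> s)"
    "(\<integral>s. (\<Sum>a\<in>A. \<Sum>b\<in>B. \<Sum>\<mu>\<in>L. \<Sum>\<nu>\<in>L'. f a b \<mu> \<nu> s) \<partial>D)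
     = (\<Sum>a\<in>A. \<Sum>b\<in>B. \<Sum>\<mu>\<in>L. \<Sum>\<nu>\<in>L'. (\<integral>s. f a b \<mu> \<nu> s \<partial>D))"
  using assms by (simp_all add: Bochner_Integration.integral_sum Bochner_Integration.integrable_sum)

lemma Rm_CP:
  assumes h: "hermitian H" and D: "real_distribution D" and X: "block_psd k X"
  shows "block_psd k (\<lambda>a b. Rm H D (X a b))"
  unfolding block_psd_def
proof
  fix v :: "nat \<Rightarrow> complex^'a"
  define g where "g \<mu> s = exp (\<i> * complex_of_real (\<mu> * s))" for \<mu> s :: real
  define C where "C a b \<mu> \<nu> = cinner (ecomp H \<mu> (v a)) (X a b *v ecomp H \<nu> (v b))" for a b \<mu> \<nu>
  define w where "w s a = (\<Sum>\<mu>\<in>spec H. g \<mu> s *s ecomp H \<mu> (v a))" for s a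
  define F where "F s = (\<Sum>a<k. \<Sum>b<k. cinner (w s a) (X a b *v w s b))" for s
  have Fpos: "Im (F s) = 0 \<and> 0 \<le> Re (F s)" for s
    using X unfolding block_psd_def F_def by blast
  have Fexp: "F s = (\<Sum>a<k. \<Sum>b<k. \<Sum>\<mu>\<in>spec H. \<Sum>\<nu>\<in>spec H. (cnj (g \<mu> s) * g \<nu> s) * C a b \<mu> \<nu>)" for s
    unfolding F_def w_def C_def
    by (simp add: cinner_sum_left cinner_sum_right mv_sum mv_scale cinner_scale_left cinner_scale_right
        sum_distrib_left mult.assoc)
       (rule sum.cong[OF refl], rule sum.cong[OF refl], subst sum.swap, simp add: ac_simps)
  have gg: "cnj (g \<mu> s) * g \<nu> s = exp (\<i> * complex_of_real ((\<nu> - \<mu>) * s))" for \<mu> \<nu> s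
    unfolding g_def by (simp add: exp_cnj exp_add[symmetric] algebra_simps)
  have meas: "(\<lambda>s. complex_of_real (t * s)) \<in> borel_measurable D" for t
    by (subst measurable_cong_sets[OF real_distribution.events_eq_borel[OF D] refl]) measurable
  have intg: "integrable D (\<lambda>s. exp (\<i> * complex_of_real (t * s)))" for t
    by (rule prob_space.integrable_iexp[OF real_distribution.axioms(1)[OF D] meas]) simp
  have intt: "integrable D (\<lambda>s. (cnj (g \<mu> s) * g \<nu> s) * C a b \<mu> \<nu>)" for a b \<mu> \<nu>
    unfolding gg by (rule Bochner_Integration.integrable_mult_left[OF intg])
  have charI: "char D (\<nu> - \<mu>) = (\<integral>s. cnj (g \<mu> s) * g \<nu> s \<partial>D)" for \<mu> \<nu>
    unfolding gg char_def by simp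
  have Q: "(\<Sum>a<k. \<Sum>b<k. cinner (v a) (Rm H D (X a b) *v v b))
      = (\<Sum>a<k. \<Sum>b<k. \<Sum>\<mu>\<in>spec H. \<Sum>\<nu>\<in>spec H. char D (\<nu> - \<mu>) * C a b \<mu> \<nu>)"
    by (simp add: Rm_mv[OF h] cinner_sum_right cinner_scale_right C_def comp_adj[OF h, symmetric])
  also have "\<dots> = (\<integral>s. F s \<partial>D)"
    unfolding Fexp charI by (simp add: int_sum4(2)[OF intt])
  finally have QF: "(\<Sum>a<k. \<Sum>b<k. cinner (v a) (Rm H D (X a b) *v v b)) = (\<integral>s. F s \<partial>D)" .
  have intF: "integrable D F" unfolding Fexp by (rule int_sum4(1)[OF intt])
  show "Im (\<Sum>a<k. \<Sum>b<k. cinner (v a) (Rm H D (X a b) *v v b)) = 0 \<and>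
        0 \<le> Re (\<Sum>a<k. \<Sum>b<k. cinner (v a) (Rm H D (X a b) *v v b))"
  proof
    show "Im (\<Sum>a<k. \<Sum>b<k. cinner (v a) (Rm H D (X a b) *v v b)) = 0"
      unfolding QF integral_Im[OF intF, symmetric] using Fpos by simp
    show "0 \<le> Re (\<Sum>a<k. \<Sum>b<k. cinner (v a) (Rm H D (X a b) *v v b))"
      unfolding QF integral_Re[OF intF, symmetric] using Fpos by (intro Bochner_Integration.integral_nonneg) simp
  qed
qed

lemma sqrt_unique:
  fixes B B0 :: "complex^'n^'n"
  assumes B: "psd B" and B0: "psd B0" and s: "s > 0"
    and B0sq: "\<And>x. B0 *v (B0 *v x) = complex_of_real s *s (B0 *v x)"
    and BB: "\<And>x. B *v (B *v x) = B0 *v (B0 *v x)"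
  shows "B = B0"
proof -
  have hB: "hermitian B" using B psd_hermitian by blast
  have pos: "0 \<le> Re (cinner y (B *v y))" for y using B unfolding psd_def by blast
  have C: "B *v (B *v x) = complex_of_real s *s (B0 *v x)" for x using BB B0sq by simp
  have comm: "B *v (B0 *v x) = B0 *v (B *v x)" for x
  proof -
    have "complex_of_real s *s (B *v (B0 *v x)) = B *v (B *v (B *v x))"
      by (simp add: C mv_scale)
    also have "\<dots> = complex_of_real s *s (B0 *v (B *v x))" by (rule C)
    finally show ?thesis using s by (simp add: vec_eq_iff)
  qed
  have ker: "B *v y = 0" if "B0 *v y = 0" for y
  proof -
    have "cinner (B *v y) (B *v y) = cinner y (B *v (B *v y))" by (simp add: herm_adj[OF hB])
    also have "\<dots> = 0" using that by (simp add: C cinner_scale_right)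
    finally show ?thesis by simp
  qed
  have "B *v x = B0 *v x" for x
  proof -
    define y where "y = x - complex_of_real (1/s) *s (B0 *v x)"
    have "B0 *v y = 0" using s by (simp add: y_def matrix_vector_mult_diff_distrib mv_scale B0sq vector_smult_assoc)
    then have "B *v y = 0" by (rule ker)
    then have Bx: "B *v x = complex_of_real (1/s) *s (B0 *v (B *v x))"
      by (simp add: y_def matrix_vector_mult_diff_distrib mv_scale comm)
    define d where "d = B *v x - B0 *v x"
    have B0d: "B0 *v d = complex_of_real s *s d"
    proof -
      have "B0 *v (B *v x) = complex_of_real s *s (B *v x)"
        using s by (subst (2) Bx) (simp add: vector_smult_assoc)
      then show ?thesis by (simp add: d_def matrix_vector_mult_diff_distrib B0sq vector_ssub_ldistrib)
    qed
    have "B *v d + B0 *v d = 0"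
      by (simp add: d_def matrix_vector_mult_diff_distrib BB comm)
    then have "B *v d = - (complex_of_real s *s d)" using B0d by (simp add: eq_neg_iff_add_eq_0)
    then have "cinner d (B *v d) = - (complex_of_real s * cinner d d)"
      by (simp add: cinner_minus_right cinner_scale_right)
    then have "Re (cinner d (B *v d)) = - (s * (norm d)^2)" by (simp add: cinner_self)
    then have "s * (norm d)^2 \<le> 0" using pos[of d] by simp
    then have "d = 0" using s by (simp add: mult_le_0_iff)
    then show ?thesis by (simp add: d_def)
  qed
  then show ?thesis by (simp add: matrix_eq)
qed

lemma trace_outer: "trace (outer u v) = cinner v u"
  by (simp add: trace_def outer_def cinner_def mult.commute)

lemma trace_norm_rank2:
  fixes \<psi> b :: "complex^'n"
  assumes pp: "cinner \<psi> \<psi> = 1" and pb: "cinner \<psi> b = 0"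
  shows "trace_norm (- (outer \<psi> b + outer b \<psi>)) = 2 * norm b"
proof -
  define G where "G = outer \<psi> b + outer b \<psi>"
  have bp: "cinner b \<psi> = 0" using pb by (metis cinner_commute complex_cnj_zero)
  have Gx: "G *v x = cinner b x *s \<psi> + cinner \<psi> x *s b" for x
    by (simp add: G_def outer_mv matrix_vector_mult_add_rdistrib)
  have cadjM: "cadj (- G) = - G"
    by (rule cadj_eq) (simp add: minus_mv Gx cinner_simps, subst (1 2) cinner_commute, simp add: algebra_simps)
  define s where "s = norm b"
  have bb: "cinner b b = complex_of_real (s^2)" by (simp add: s_def cinner_self)
  have GG: "(cadj (- G) ** (- G)) *v x = complex_of_real (s^2) *s (cinner \<psi> x *s \<psi>) + cinner b x *s b" for x
    by (simp add: cadjM mm_mv minus_mv mv_minus Gx matrix_vector_right_distrib mv_scale cinner_simps pp pb bp bb)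
  show ?thesis
  proof (cases "b = 0")
    case True
    then have G0: "cadj (- G) ** (- G) = 0" by (simp add: matrix_eq GG s_def)
    have "mabs (- G) = 0" unfolding mabs_def G0
    proof (rule the_equality)
      show "psd 0 \<and> (0::complex^'n^'n) ** 0 = 0" by (simp add: psd_def)
      fix B :: "complex^'n^'n" assume a: "psd B \<and> B ** B = 0"
      then have hB: "hermitian B" using psd_hermitian by blast
      have "B *v x = 0" for x
      proof -
        have "cinner (B *v x) (B *v x) = cinner x ((B ** B) *v x)" by (simp add: herm_adj[OF hB] mm_mv)
        then show ?thesis using a by simp
      qed
      then show "B = 0" by (simp add: matrix_eq)
    qed
    then show ?thesis using True by (simp add: trace_norm_def G_def trace_0[simplified])
  next
    case False
    then have sp: "s > 0" by (simp add: s_def)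
    define B0 where "B0 = cscale (complex_of_real s) (outer \<psi> \<psi>) + cscale (complex_of_real (1/s)) (outer b b)"
    have B0x: "B0 *v x = complex_of_real s *s (cinner \<psi> x *s \<psi>) + complex_of_real (1/s) *s (cinner b x *s b)" for x
      by (simp add: B0_def matrix_vector_mult_add_rdistrib cscale_mv outer_mv)
    have B0sq: "B0 *v (B0 *v x) = complex_of_real s *s (B0 *v x)" for x
      using sp by (simp add: B0x matrix_vector_right_distrib mv_scale cinner_simps pp pb bp bb
          vector_smult_assoc vector_add_ldistrib power2_eq_square field_simps)
    have B0psd: "psd B0"
      unfolding psd_def
    proof
      fix v
      have "cinner v (B0 *v v) = complex_of_real s * (cinner v \<psi> * cnj (cinner v \<psi>)) + (cinner v b * cnj (cinner v b)) / complex_of_real s"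
        by (simp add: B0x cinner_simps, subst (1 2) cinner_commute[of _ v]) (simp add: algebra_simps)
      also have "\<dots> = complex_of_real (s * (cmod (cinner v \<psi>))^2 + (cmod (cinner v b))^2 / s)"
        by (simp only: of_real_add of_real_mult of_real_divide complex_norm_square)
      finally have "cinner v (B0 *v v) = complex_of_real (s * (cmod (cinner v \<psi>))^2 + (cmod (cinner v b))^2 / s)" .
      then show "Im (cinner v (B0 *v v)) = 0 \<and> 0 \<le> Re (cinner v (B0 *v v))" using sp by simp
    qed
    have sq1: "B0 *v (B0 *v x) = (cadj (- G) ** (- G)) *v x" for x
      unfolding B0sq GG using sp by (simp add: B0x vector_add_ldistrib vector_smult_assoc power2_eq_square)
    have sq: "B0 ** B0 = cadj (- G) ** (- G)"
      unfolding matrix_eq by (simp only: mm_mv[of B0 B0] sq1 simp_thms)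
    have "mabs (- G) = B0" unfolding mabs_def
    proof (rule the_equality)
      show "psd B0 \<and> B0 ** B0 = cadj (- G) ** (- G)" using B0psd sq by blast
      fix B assume a: "psd B \<and> B ** B = cadj (- G) ** (- G)"
      show "B = B0"
        by (rule sqrt_unique[OF _ B0psd sp B0sq]) (use a sq in \<open>simp_all add: mm_mv[symmetric]\<close>)
    qed
    moreover have "trace B0 = complex_of_real (2 * s)"
      using sp by (simp add: B0_def trace_add trace_cscale trace_outer pp bb power2_eq_square)
    ultimately show ?thesis by (simp add: trace_norm_def G_def s_def)
  qed
qed

lemma trace_axis: "trace A = (\<Sum>i\<in>UNIV. cinner (axis i 1) (A *v axis i 1))"
  by (simp add: trace_def cinner_axis)

lemma trace_psd_nonneg: "psd A \<Longrightarrow> 0 \<le> Re (trace A)"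
  unfolding trace_axis psd_def by (simp add: Re_sum sum_nonneg)

lemma trace_mm_outer: "trace (A ** outer u v) = cinner v (A *v u)"
  unfolding trace_def matrix_matrix_mult_def outer_def cinner_def matrix_vector_mult_def
  by (simp add: sum_distrib_left mult_ac)

lemma trace_bound:
  assumes p: "psd \<rho>" and ee: "cinner e e = 1" and ff: "cinner f f = 1" and ef: "cinner e f = 0"
  shows "Re (cinner e (\<rho> *v e)) + Re (cinner f (\<rho> *v f)) \<le> Re (trace \<rho>)"
proof -
  have fe: "cinner f e = 0" using ef by (metis cinner_commute complex_cnj_zero)
  define Q where "Q = mat 1 - outer e e - outer f f"
  have Qx: "Q *v x = x - cinner e x *s e - cinner f x *s f" for x
    by (simp add: Q_def matrix_vector_mult_diff_rdistrib outer_mv)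
  have QQ: "Q ** Q = Q"
    by (simp add: matrix_eq mm_mv Qx matrix_vector_mult_diff_distrib cinner_simps ee ff ef fe)
  have Qadj: "cinner (Q *v x) y = cinner x (Q *v y)" for x y
    by (simp add: Qx cinner_simps, subst (1 2) cinner_commute[of _ x], simp add: mult.commute)
  have psdQ: "psd (Q ** \<rho> ** Q)"
    unfolding psd_def
  proof
    fix x
    have "cinner x ((Q ** \<rho> ** Q) *v x) = cinner (Q *v x) (\<rho> *v (Q *v x))"
      by (simp add: mm_mv Qadj)
    then show "Im (cinner x ((Q ** \<rho> ** Q) *v x)) = 0 \<and> 0 \<le> Re (cinner x ((Q ** \<rho> ** Q) *v x))"
      using p unfolding psd_def by simp
  qed
  have "mat 1 = outer e e + outer f f + Q" by (simp add: Q_def)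
  then have "trace \<rho> = trace (\<rho> ** (outer e e + outer f f + Q))" by (metis matrix_mul_rid)
  also have "\<dots> = cinner e (\<rho> *v e) + cinner f (\<rho> *v f) + trace (\<rho> ** Q)"
    by (simp add: matrix_add_ldistrib trace_add trace_mm_outer)
  also have "trace (\<rho> ** Q) = trace (Q ** \<rho> ** Q)"
    by (metis QQ matrix_mul_assoc trace_comm)
  finally have "Re (trace \<rho>) = Re (cinner e (\<rho> *v e)) + Re (cinner f (\<rho> *v f)) + Re (trace (Q ** \<rho> ** Q))"
    by simp
  then show ?thesis using trace_psd_nonneg[OF psdQ] by simp
qed

lemma quad_form_bound:
  fixes a m c :: real
  assumes "\<forall>\<alpha> \<beta>. 0 \<le> \<alpha>^2 * a + 2 * \<alpha> * \<beta> * m + \<beta>^2 * c" "0 \<le> a" "0 \<le> c"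
  shows "m^2 \<le> a * c"
proof (cases "c = 0")
  case False
  then have cp: "c > 0" using assms by simp
  have "0 \<le> c^2 * a + 2 * c * (-m) * m + (-m)^2 * c" using assms(1) by blast
  then have "0 \<le> c * (c * a - m^2)" by (simp add: power2_eq_square algebra_simps)
  then have "m^2 \<le> c * a" using cp by (simp add: zero_le_mult_iff)
  then show ?thesis by (simp add: mult.commute)
next
  case True
  have "0 \<le> m^2 * a + 2 * m * (-(a+1)) * m + (-(a+1))^2 * c" using assms(1) by blast
  then have "0 \<le> - (m^2 * (a + 2))" using True by (simp add: power2_eq_square algebra_simps)
  then have "m^2 * (a + 2) \<le> 0" by simp
  then have "m^2 \<le> 0" using assms(2) by (simp add: mult_le_0_iff)
  then show ?thesis using True by simp
qed

lemma quarter: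
  assumes p: "psd \<rho>" and tr: "trace \<rho> = 1" and pp: "cinner \<psi> \<psi> = 1"
  shows "(norm (\<rho> *v \<psi> - cinner \<psi> (\<rho> *v \<psi>) *s \<psi>))^2 \<le> 1/4"
proof -
  have h: "hermitian \<rho>" using p psd_hermitian by blast
  define a where "a = Re (cinner \<psi> (\<rho> *v \<psi>))"
  have za: "cinner \<psi> (\<rho> *v \<psi>) = complex_of_real a"
    using herm_real[OF h, of \<psi>] by (simp add: a_def complex_eq_iff)
  have a0: "0 \<le> a" using p unfolding psd_def a_def by blast
  define w where "w = \<rho> *v \<psi> - complex_of_real a *s \<psi>"
  have pw: "cinner \<psi> w = 0" by (simp add: w_def cinner_simps za pp)
  have wp: "cinner w \<psi> = 0" using pw by (metis cinner_commute complex_cnj_zero)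
  define m where "m = Re (cinner w w)"
  have wwm: "cinner w w = complex_of_real m" by (simp add: m_def cinner_self)
  have m0: "0 \<le> m" by (simp add: m_def Re_cinner_self_ge0)
  have rpsi: "\<rho> *v \<psi> = w + complex_of_real a *s \<psi>" by (simp add: w_def)
  have c1: "cinner w (\<rho> *v \<psi>) = complex_of_real m"
    by (simp add: rpsi cinner_simps wwm wp)
  have c2: "cinner \<psi> (\<rho> *v w) = complex_of_real m"
    by (simp add: herm_adj[OF h, symmetric] rpsi cinner_simps wwm pw)
  define c where "c = Re (cinner w (\<rho> *v w))"
  have c0: "0 \<le> c" using p unfolding psd_def c_def by blast
  have "0 \<le> \<alpha>^2 * a + 2 * \<alpha> * \<beta> * m + \<beta>^2 * c" for \<alpha> \<beta>
  proof -
    let ?x = "complex_of_real \<alpha> *s \<psi> + complex_of_real \<beta> *s w"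
    have "0 \<le> Re (cinner ?x (\<rho> *v ?x))" using p unfolding psd_def by blast
    also have "Re (cinner ?x (\<rho> *v ?x)) = \<alpha>^2 * a + 2 * \<alpha> * \<beta> * m + \<beta>^2 * c"
      by (simp add: matrix_vector_right_distrib mv_scale cinner_simps za c1 c2 c_def power2_eq_square algebra_simps)
    finally show ?thesis .
  qed
  then have mac: "m^2 \<le> a * c" using quad_form_bound a0 c0 by blast
  have "m \<le> 1/4"
  proof (cases "m = 0")
    case False
    then have mp: "m > 0" using m0 by simp
    define f where "f = complex_of_real (1 / sqrt m) *s w"
    have sq: "complex_of_real (sqrt m) * complex_of_real (sqrt m) = complex_of_real m"
      using m0 by (simp flip: of_real_mult)
    have ff: "cinner f f = 1" using mp by (simp add: f_def cinner_simps wwm sq)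
    have pf: "cinner \<psi> f = 0" by (simp add: f_def cinner_simps pw)
    have cf: "Re (cinner f (\<rho> *v f)) = c / m"
      using mp by (simp add: f_def cinner_simps mv_scale c_def)
    have "a + c / m \<le> 1"
      using trace_bound[OF p pp ff pf] tr cf by (simp add: a_def)
    then have "c \<le> (1 - a) * m" using mp by (simp add: field_simps)
    then have "a * c \<le> a * ((1 - a) * m)" using a0 by (simp add: mult_left_mono)
    then have "m * m \<le> m * (a * (1 - a))" using mac by (simp add: power2_eq_square algebra_simps)
    then have "m \<le> a * (1 - a)" using mp by simp
    also have "\<dots> \<le> 1/4" using zero_le_power2[of "a - 1/2"] by (simp add: power2_eq_square algebra_simps)
    finally show ?thesis .
  qed simp
  then show ?thesis by (simp add: w_def[symmetric] m_def cinner_self za)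
qed

lemma char_cnj: "cnj (char D t) = char D (-t)"
proof -
  have "cnj (char D t) = (\<integral>x. cnj (exp (\<i> * complex_of_real (t * x))) \<partial>D)"
    unfolding char_def by (rule Bochner_Integration.integral_cnj[symmetric])
  also have "\<dots> = char D (-t)"
    unfolding char_def by (simp del: Bochner_Integration.integral_cnj add: exp_cnj)
  finally show ?thesis .
qed

lemma sum_diag:
  assumes "finite A" "\<And>\<mu> \<nu>. \<mu> \<noteq> \<nu> \<Longrightarrow> f \<mu> \<nu> = (0::'a::comm_monoid_add)"
  shows "(\<Sum>\<mu>\<in>A. \<Sum>\<nu>\<in>A. f \<mu> \<nu>) = (\<Sum>\<mu>\<in>A. f \<mu> \<mu>)"
proof (rule sum.cong[OF refl])
  fix \<mu> assume m: "\<mu> \<in> A"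
  show "(\<Sum>\<nu>\<in>A. f \<mu> \<nu>) = f \<mu> \<mu>"
  proof -
    have "sum (f \<mu>) (A - {\<mu>}) = 0" using assms(2) by (intro sum.neutral) (metis DiffE singletonI)
    then show ?thesis by (simp add: sum.remove[OF assms(1) m])
  qed
qed

lemma split4:
  assumes "finite S" "e \<in> S"
  shows "(\<Sum>\<mu>\<in>S. \<Sum>\<nu>\<in>S. T \<mu> \<nu>) = T e e + (\<Sum>\<nu>\<in>S-{e}. T e \<nu>) + (\<Sum>\<mu>\<in>S-{e}. T \<mu> e)
     + (\<Sum>\<mu>\<in>S-{e}. \<Sum>\<nu>\<in>S-{e}. (T \<mu> \<nu> :: 'a::comm_monoid_add))"
  by (simp add: sum.remove[OF assms] sum.distrib ac_simps)

lemma sum_smult: "(\<Sum>i\<in>S. f i) *s (v::complex^'n) = (\<Sum>i\<in>S. f i *s v)"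
  by (induction S rule: infinite_finite_induct) (auto simp: vector_sadd_rdistrib)

lemma comp_diff: "hermitian H \<Longrightarrow> ecomp H \<mu> (x - y) = ecomp H \<mu> x - ecomp H \<mu> y"
  using comp_add[of H \<mu> x "- y"] comp_scale[of H \<mu> "-1" y] by (simp add: vector_sneg_minus1[symmetric])

lemma pyth:
  assumes h: "hermitian H" and A: "A \<subseteq> spec H"
  shows "cinner (\<Sum>\<mu>\<in>A. a \<mu> *s ecomp H \<mu> y) (\<Sum>\<mu>\<in>A. a \<mu> *s ecomp H \<mu> y)
       = (\<Sum>\<mu>\<in>A. (cnj (a \<mu>) * a \<mu>) * cinner (ecomp H \<mu> y) (ecomp H \<mu> y))"
proof -
  have fA: "finite A" using A finite_spec[OF h] finite_subset by blast
  have "cinner (\<Sum>\<mu>\<in>A. a \<mu> *s ecomp H \<mu> y) (\<Sum>\<mu>\<in>A. a \<mu> *s ecomp H \<mu> y)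
      = (\<Sum>\<nu>\<in>A. \<Sum>\<mu>\<in>A. a \<nu> * (cnj (a \<mu>) * cinner (ecomp H \<mu> y) (ecomp H \<nu> y)))"
    by (simp add: cinner_sum_left cinner_sum_right cinner_scale_left cinner_scale_right sum_distrib_left)
  also have "\<dots> = (\<Sum>\<nu>\<in>A. a \<nu> * (cnj (a \<nu>) * cinner (ecomp H \<nu> y) (ecomp H \<nu> y)))"
    by (rule sum_diag[OF fA]) (simp add: comp_orth[OF h])
  also have "\<dots> = (\<Sum>\<mu>\<in>A. (cnj (a \<mu>) * a \<mu>) * cinner (ecomp H \<mu> y) (ecomp H \<mu> y))"
    by (simp add: ac_simps)
  finally show ?thesis .
qed

theorem lemma2:
  fixes H :: "complex^'n^'n" and \<psi> :: "complex^'n" and E0 :: real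
    and M :: "'a measure" and T :: "'a \<Rightarrow> real" and X :: "nat \<Rightarrow> 'a \<Rightarrow> real"
    and n :: nat and \<epsilon> :: real
  assumes herm: "hermitian H"
    and eig: "H *v \<psi> = complex_of_real E0 *s \<psi>" and unit: "norm \<psi> = 1"
    and nondeg: "\<forall>v. H *v v = complex_of_real E0 *s v \<longrightarrow> (\<exists>c. v = c *s \<psi>)"
    and prob: "prob_space M"
    and T_rv: "T \<in> borel_measurable M"
    and eps: "\<epsilon> = (let \<Omega> = {E0 - \<mu> | \<mu>. \<mu> \<noteq> E0 \<and>
                        (\<exists>v. v \<noteq> 0 \<and> H *v v = complex_of_real \<mu> *s v)}
                 in if \<Omega> = {} then 0
                    else Sup ((\<lambda>\<omega>. cmod (char (distr M borel T) \<omega>)) ` \<Omega>))"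
    and n: "n \<ge> 1"
    and X_rv: "\<forall>i<n. X i \<in> borel_measurable M"
    and X_indep: "prob_space.indep_vars M (\<lambda>_. borel) X {..<n}"
    and X_copies: "\<forall>i<n. distr M borel (X i) = distr M borel T"
  shows "\<exists>\<E>. quantum_operation \<E> \<and>
     (\<forall>\<rho>. density \<rho> \<longrightarrow>
        trace_norm (
          (outer \<psi> \<psi> ** \<rho> ** outer \<psi> \<psi>
            + \<E> ((mat 1 - outer \<psi> \<psi>) ** \<rho> ** (mat 1 - outer \<psi> \<psi>)))
          - (\<integral>x. mexp (cscale (- \<i> * complex_of_real (\<Sum>i<n. X i x)) H) ** \<rho>
                   ** mexp (cscale (\<i> * complex_of_real (\<Sum>i<n. X i x)) H) \<partial>M))
        \<le> \<epsilon> ^ n)"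
proof -
  note h = herm
  define c where "c x = (\<Sum>i<n. X i x)" for x
  have c_meas: "c \<in> borel_measurable M" unfolding c_def using X_rv by (intro borel_measurable_sum) auto
  define D where "D = distr M borel c"
  have Ddist: "real_distribution D" unfolding D_def using prob c_meas
    by (intro prob_space.real_distribution_distr) auto
  define \<Phi> where "\<Phi> = char (distr M borel T)"
  have charD: "char D t = \<Phi> t ^ n" for t
  proof -
    have "char D t = (\<Prod>i\<in>{..<n}. char (distr M borel (X i)) t)"
      unfolding D_def c_def by (rule prob_space.char_distr_sum[OF prob X_indep])
    also have "\<dots> = (\<Prod>i\<in>{..<n}. \<Phi> t)" using X_copies by (simp add: \<Phi>_def)
    finally show ?thesis by simp
  qed
  have char0: "char D 0 = 1" using real_distribution.char_zero[OF Ddist] .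
  have pp: "cinner \<psi> \<psi> = 1" using unit by (simp add: cinner_self)
  have psi0: "\<psi> \<noteq> 0" using pp by auto
  have eigpsi: "eig H E0 \<psi>" using eig by (simp add: eig_def)
  have E0S: "E0 \<in> spec H" using psi0 eigpsi by (auto simp: spec_def)
  have cpsi: "ecomp H \<mu> \<psi> = (if \<mu> = E0 then \<psi> else 0)" for \<mu>
    by (rule comp_eigvec[OF h eigpsi])
  have cE0: "ecomp H E0 x = cinner \<psi> x *s \<psi>" for x
  proof -
    obtain k where k: "ecomp H E0 x = k *s \<psi>" using nondeg comp_eig[OF h, of E0 x] unfolding eig_def by blast
    have "cinner \<psi> (ecomp H E0 x) = cinner (ecomp H E0 \<psi>) x" by (rule comp_adj[OF h, symmetric])
    then have "k = cinner \<psi> x" using k by (simp add: cpsi cinner_scale_right pp)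
    then show ?thesis using k by simp
  qed
  define Q where "Q = mat 1 - outer \<psi> \<psi>"
  have Qv: "Q *v y = y - cinner \<psi> y *s \<psi>" for y
    by (simp add: Q_def matrix_vector_mult_diff_rdistrib outer_mv)
  have ecQ: "ecomp H \<mu> (Q *v y) = (if \<mu> = E0 then 0 else ecomp H \<mu> y)" for \<mu> y
    by (simp add: Qv comp_diff[OF h] comp_scale[OF h] cpsi cE0)
  have Qec: "Q *v ecomp H \<nu> x = (if \<nu> = E0 then 0 else ecomp H \<nu> x)" for \<nu> x
  proof -
    have "cinner \<psi> (ecomp H \<nu> x) = cinner (ecomp H \<nu> \<psi>) x" by (rule comp_adj[OF h, symmetric])
    then show ?thesis by (simp add: Qv cpsi cE0)
  qed
  define S' where "S' = spec H - {E0}"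
  have finS: "finite (spec H)" by (rule finite_spec[OF h])
  show ?thesis
  proof (intro exI conjI allI impI)
    show "quantum_operation (Rm H D)"
      unfolding quantum_operation_def
      using Rm_add[OF h Ddist] Rm_scale[OF h Ddist] Rm_CP[OF h Ddist] Rm_trace[OF h Ddist] by blast
    fix \<rho> :: "complex^'n^'n" assume dens: "density \<rho>"
    have rpsd: "psd \<rho>" and rtr: "trace \<rho> = 1" using dens by (auto simp: density_def)
    have hr: "hermitian \<rho>" using rpsd psd_hermitian by blast
    have int: "(\<integral>x. mexp (cscale (- \<i> * complex_of_real (\<Sum>i<n. X i x)) H) ** \<rho>
                   ** mexp (cscale (\<i> * complex_of_real (\<Sum>i<n. X i x)) H) \<partial>M) = Rm H D \<rho>"
      using integral_R[OF h prob c_meas, of \<rho>] by (simp add: D_def c_def)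
    define b where "b = (\<Sum>\<mu>\<in>S'. char D (E0 - \<mu>) *s ecomp H \<mu> (\<rho> *v \<psi>))"
    define w where "w = (\<Sum>\<mu>\<in>S'. 1 *s ecomp H \<mu> (\<rho> *v \<psi>))"
    define T' where "T' \<mu> \<nu> x = char D (\<nu> - \<mu>) *s ecomp H \<mu> (\<rho> *v ecomp H \<nu> x)" for \<mu> \<nu> x
    have LHS: "outer \<psi> \<psi> ** \<rho> ** outer \<psi> \<psi> + Rm H D (Q ** \<rho> ** Q) - Rm H D \<rho>
        = - (outer \<psi> b + outer b \<psi>)"
    proof -
      have "(outer \<psi> \<psi> ** \<rho> ** outer \<psi> \<psi> + Rm H D (Q ** \<rho> ** Q) - Rm H D \<rho>) *v x
          = - ((outer \<psi> b + outer b \<psi>) *v x)" for x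
      proof -
        let ?T = "\<lambda>\<mu> \<nu>. T' \<mu> \<nu> x"
        have R1: "Rm H D \<rho> *v x = (\<Sum>\<mu>\<in>spec H. \<Sum>\<nu>\<in>spec H. ?T \<mu> \<nu>)"
          by (simp add: Rm_mv[OF h] T'_def)
        have "Rm H D (Q ** \<rho> ** Q) *v x = (\<Sum>\<mu>\<in>spec H. \<Sum>\<nu>\<in>spec H. (if \<mu> = E0 \<or> \<nu> = E0 then 0 else ?T \<mu> \<nu>))"
          unfolding Rm_mv[OF h] by (intro sum.cong refl) (auto simp: mm_mv Qec ecQ T'_def comp_0[OF h])
        also have "\<dots> = (\<Sum>\<mu>\<in>S'. \<Sum>\<nu>\<in>S'. ?T \<mu> \<nu>)"
          unfolding split4[OF finS E0S] S'_def[symmetric] by (auto intro!: sum.cong simp: S'_def)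
        finally have R2: "Rm H D (Q ** \<rho> ** Q) *v x = (\<Sum>\<mu>\<in>S'. \<Sum>\<nu>\<in>S'. ?T \<mu> \<nu>)" .
        have R3: "(outer \<psi> \<psi> ** \<rho> ** outer \<psi> \<psi>) *v x = ?T E0 E0"
          by (simp add: T'_def char0 cE0 mm_mv outer_mv)
        have R4: "(\<Sum>\<nu>\<in>S'. ?T E0 \<nu>) = cinner b x *s \<psi>"
        proof -
          have "cinner b x = (\<Sum>\<mu>\<in>S'. char D (\<mu> - E0) * cinner \<psi> (\<rho> *v ecomp H \<mu> x))"
            by (simp add: b_def cinner_sum_left cinner_scale_left char_cnj comp_adj[OF h] herm_adj[OF hr])
          then show ?thesis
            by (simp add: T'_def cE0 sum_smult vector_smult_assoc)
        qed
        have R5: "(\<Sum>\<mu>\<in>S'. ?T \<mu> E0) = cinner \<psi> x *s b"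
          by (simp add: T'_def cE0 b_def mv_scale comp_scale[OF h] scale_sum vector_smult_assoc mult.commute)
        have G: "(outer \<psi> b + outer b \<psi>) *v x = cinner b x *s \<psi> + cinner \<psi> x *s b"
          by (simp add: matrix_vector_mult_add_rdistrib outer_mv)
        show ?thesis
          unfolding matrix_vector_mult_diff_rdistrib matrix_vector_mult_add_rdistrib R1 R2 R3
            split4[OF finS E0S] S'_def[symmetric]
          by (simp add: outer_mv R4 R5 algebra_simps)
      qed
      then show ?thesis unfolding matrix_eq minus_mv by blast
    qed
    have pb: "cinner \<psi> b = 0"
      unfolding b_def
      by (auto simp: cinner_sum_right cinner_scale_right comp_adj[OF h, symmetric] cpsi S'_def intro!: sum.neutral)
    have nb: "2 * norm b \<le> \<epsilon> ^ n"
    proof -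
      define \<Omega> where "\<Omega> = {E0 - \<mu> | \<mu>. \<mu> \<noteq> E0 \<and> (\<exists>v. v \<noteq> 0 \<and> H *v v = complex_of_real \<mu> *s v)}"
      have Om: "\<Omega> = (\<lambda>\<mu>. E0 - \<mu>) ` S'" unfolding \<Omega>_def S'_def spec_def eig_def by auto
      have finO: "finite \<Omega>" using Om finS S'_def by simp
      have epsO: "\<epsilon> = (if \<Omega> = {} then 0 else Sup ((\<lambda>\<omega>. cmod (\<Phi> \<omega>)) ` \<Omega>))"
        using eps unfolding Let_def by (simp only: \<Omega>_def[symmetric] \<Phi>_def[symmetric])
      have le: "cmod (\<Phi> \<omega>) \<le> \<epsilon>" if "\<omega> \<in> \<Omega>" for \<omega>
      proof -
        have "cmod (\<Phi> \<omega>) \<le> Sup ((\<lambda>\<omega>. cmod (\<Phi> \<omega>)) ` \<Omega>)"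
          using that finO by (intro cSup_upper) auto
        then show ?thesis using epsO that by auto
      qed
      have eps0: "0 \<le> \<epsilon>"
      proof (cases "\<Omega> = {}")
        case True then show ?thesis using epsO by simp
      next
        case False
        then obtain \<omega> where "\<omega> \<in> \<Omega>" by blast
        then show ?thesis using le[of \<omega>] norm_ge_zero[of "\<Phi> \<omega>"] by linarith
      qed
      have epsb: "cmod (char D (E0 - \<mu>)) \<le> \<epsilon> ^ n" if "\<mu> \<in> S'" for \<mu>
      proof -
        have "E0 - \<mu> \<in> \<Omega>" using that Om by blast
        then have "cmod (\<Phi> (E0 - \<mu>)) \<le> \<epsilon>" by (rule le)
        then show ?thesis unfolding charD norm_power by (intro power_mono) auto
      qed
      have S'sub: "S' \<subseteq> spec H" by (auto simp: S'_def)
      have finS': "finite S'" using finS by (simp add: S'_def)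
      have wS: "w = \<rho> *v \<psi> - cinner \<psi> (\<rho> *v \<psi>) *s \<psi>"
      proof -
        have "\<rho> *v \<psi> = (\<Sum>\<mu>\<in>spec H. ecomp H \<mu> (\<rho> *v \<psi>))" by (rule comp_sum[OF h, symmetric])
        also have "\<dots> = cinner \<psi> (\<rho> *v \<psi>) *s \<psi> + w"
          by (simp add: sum.remove[OF finS E0S] cE0 w_def S'_def)
        finally show ?thesis by (metis add_diff_cancel_left')
      qed
      have w2: "(norm w)^2 \<le> 1/4" using quarter[OF rpsd rtr pp] wS by simp
      have cn: "cnj z * z = complex_of_real ((cmod z)^2)" for z by (metis complex_norm_square mult.commute)
      have bb: "(norm b)^2 = (\<Sum>\<mu>\<in>S'. (cmod (char D (E0 - \<mu>)))^2 * (norm (ecomp H \<mu> (\<rho> *v \<psi>)))^2)"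
      proof -
        have "complex_of_real ((norm b)^2) = complex_of_real (\<Sum>\<mu>\<in>S'. (cmod (char D (E0 - \<mu>)))^2 * (norm (ecomp H \<mu> (\<rho> *v \<psi>)))^2)"
          unfolding cinner_self[symmetric] b_def pyth[OF h S'sub] by (simp add: cn cinner_self)
        then show ?thesis by (simp only: of_real_eq_iff)
      qed
      have ww: "(norm w)^2 = (\<Sum>\<mu>\<in>S'. (norm (ecomp H \<mu> (\<rho> *v \<psi>)))^2)"
      proof -
        have "complex_of_real ((norm w)^2) = complex_of_real (\<Sum>\<mu>\<in>S'. (norm (ecomp H \<mu> (\<rho> *v \<psi>)))^2)"
          unfolding cinner_self[symmetric] w_def pyth[OF h S'sub] by (simp add: cinner_self)
        then show ?thesis by (simp only: of_real_eq_iff)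
      qed
      have "(norm b)^2 \<le> (\<Sum>\<mu>\<in>S'. (\<epsilon> ^ n)^2 * (norm (ecomp H \<mu> (\<rho> *v \<psi>)))^2)"
        unfolding bb
      proof (rule sum_mono)
        fix \<mu> assume "\<mu> \<in> S'"
        then have "(cmod (char D (E0 - \<mu>)))^2 \<le> (\<epsilon> ^ n)^2" using epsb by (intro power_mono) auto
        then show "(cmod (char D (E0 - \<mu>)))^2 * (norm (ecomp H \<mu> (\<rho> *v \<psi>)))^2
            \<le> (\<epsilon> ^ n)^2 * (norm (ecomp H \<mu> (\<rho> *v \<psi>)))^2" by (rule mult_right_mono) simp
      qed
      also have "\<dots> = (\<epsilon> ^ n)^2 * (norm w)^2" by (simp only: ww sum_distrib_left)
      also have "\<dots> \<le> (\<epsilon> ^ n)^2 * (1/4)" using w2 by (rule mult_left_mono) simp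
      finally have nb4: "(norm b)^2 \<le> (\<epsilon> ^ n)^2 * (1/4)" .
      have "(2 * norm b)^2 = 4 * (norm b)^2" by (simp add: power2_eq_square)
      then have "(2 * norm b)^2 \<le> (\<epsilon> ^ n)^2" using nb4 by linarith
      moreover have "0 \<le> \<epsilon> ^ n" using eps0 by simp
      ultimately show ?thesis by (rule power2_le_imp_le)
    qed
    show "trace_norm (outer \<psi> \<psi> ** \<rho> ** outer \<psi> \<psi> + Rm H D ((mat 1 - outer \<psi> \<psi>) ** \<rho> ** (mat 1 - outer \<psi> \<psi>)) -
      (\<integral>x. mexp (cscale (- \<i> * complex_of_real (\<Sum>i<n. X i x)) H) ** \<rho>
                   ** mexp (cscale (\<i> * complex_of_real (\<Sum>i<n. X i x)) H) \<partial>M)) \<le> \<epsilon> ^ n"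
      unfolding int Q_def[symmetric] LHS trace_norm_rank2[OF pp pb] using nb .
  qed
qed

end
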